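(* Let $W$ be a 1-planar graph of class $\mathcal C_1$. If $W$ has at most 8 vertices, then any $\mathcal C_1$-drawing of $W$ has at most two crossings.
   Context: All graphs are finite, simple and undirected. A drawing is 1-planar if each edge is crossed at most once (adjacent edges never cross, no edge crosses itself). For a 1-planar drawing $D$, $D^\times$ is the plane graph obtained by turning each crossing into a new degree-4 vertex (a false vertex); $N_{D^\times}(c)$ is the neighbour set of a false vertex $c$. A 1-planar graph is of class $\mathcal C_0$ if it has a 1-planar drawing with $|N_{D^\times}(c_1)\cap N_{D^\times}(c_2)|=0$ for all distinct false vertices; it is of class $\mathcal C_1$ if it is not of class $\mathcal C_0$ and it has a 1-planar drawing with $|N_{D^\times}(c_1)\cap N_{D^\times}(c_2)|\le 1$ for all distinct false vertices $c_1,c_2$. A $\mathcal C_1$-drawing is a 1-planar drawing $D$ with $|N_{D^\times}(c_1)\cap N_{D^\times}(c_2)|\le 1$ for all distinct false vertices $c_1,c_2$. *)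

theory Defs
  imports "HOL-Analysis.Analysis"
begin

definition simple_graph :: "'a set \<Rightarrow> 'a set set \<Rightarrow> bool" where
  "simple_graph V E \<longleftrightarrow> finite V \<and>
     (\<forall>e\<in>E. \<exists>u v. u \<in> V \<and> v \<in> V \<and> u \<noteq> v \<and> e = {u, v})"

definition drawing :: "'a set \<Rightarrow> 'a set set \<Rightarrow> ('a \<Rightarrow> complex) \<Rightarrow> ('a set \<Rightarrow> real \<Rightarrow> complex) \<Rightarrow> bool" where
  "drawing V E pos g \<longleftrightarrow> inj_on pos V \<and>
     (\<forall>e\<in>E. arc (g e) \<and> {pathstart (g e), pathfinish (g e)} = pos ` e \<and>
            (\<forall>v\<in>V. pos v \<notin> g e ` {0<..<1}))"

definition cross :: "'a set set \<Rightarrow> ('a set \<Rightarrow> real \<Rightarrow> complex) \<Rightarrow> 'a set \<Rightarrow> 'a set \<Rightarrow> complex \<Rightarrow> bool" where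
  "cross E g e f p \<longleftrightarrow> e \<in> E \<and> f \<in> E \<and> e \<noteq> f \<and>
     p \<in> g e ` {0<..<1} \<and> p \<in> g f ` {0<..<1}"

text \<open>1-planar drawing: each edge is crossed at most once (at most one other edge,
  at most one point), adjacent edges never cross (no edge crosses itself since arcs
  are injective).\<close>
definition one_planar_drawing :: "'a set \<Rightarrow> 'a set set \<Rightarrow> ('a \<Rightarrow> complex) \<Rightarrow> ('a set \<Rightarrow> real \<Rightarrow> complex) \<Rightarrow> bool" where
  "one_planar_drawing V E pos g \<longleftrightarrow> drawing V E pos g \<and>
     (\<forall>e f p f' p'. cross E g e f p \<and> cross E g e f' p' \<longrightarrow> f = f' \<and> p = p') \<and>
     (\<forall>e f p. cross E g e f p \<longrightarrow> e \<inter> f = {})"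

definition crossings :: "'a set set \<Rightarrow> ('a set \<Rightarrow> real \<Rightarrow> complex) \<Rightarrow> complex set" where
  "crossings E g = {p. \<exists>e f. cross E g e f p}"

text \<open>Neighbourhood of a false vertex c in D^x: the endpoints of the two edges crossing at c.\<close>
definition false_nbrs :: "'a set set \<Rightarrow> ('a set \<Rightarrow> real \<Rightarrow> complex) \<Rightarrow> complex \<Rightarrow> 'a set" where
  "false_nbrs E g c = \<Union>{e. \<exists>f. cross E g e f c}"

definition C0_drawing :: "'a set \<Rightarrow> 'a set set \<Rightarrow> ('a \<Rightarrow> complex) \<Rightarrow> ('a set \<Rightarrow> real \<Rightarrow> complex) \<Rightarrow> bool" where
  "C0_drawing V E pos g \<longleftrightarrow> one_planar_drawing V E pos g \<and>
     (\<forall>c1\<in>crossings E g. \<forall>c2\<in>crossings E g. c1 \<noteq> c2 \<longrightarrow>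
        card (false_nbrs E g c1 \<inter> false_nbrs E g c2) = 0)"

definition C1_drawing :: "'a set \<Rightarrow> 'a set set \<Rightarrow> ('a \<Rightarrow> complex) \<Rightarrow> ('a set \<Rightarrow> real \<Rightarrow> complex) \<Rightarrow> bool" where
  "C1_drawing V E pos g \<longleftrightarrow> one_planar_drawing V E pos g \<and>
     (\<forall>c1\<in>crossings E g. \<forall>c2\<in>crossings E g. c1 \<noteq> c2 \<longrightarrow>
        card (false_nbrs E g c1 \<inter> false_nbrs E g c2) \<le> 1)"

definition class_C0 :: "'a set \<Rightarrow> 'a set set \<Rightarrow> bool" where
  "class_C0 V E \<longleftrightarrow> (\<exists>pos g. C0_drawing V E pos g)"

definition class_C1 :: "'a set \<Rightarrow> 'a set set \<Rightarrow> bool" where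
  "class_C1 V E \<longleftrightarrow> \<not> class_C0 V E \<and> (\<exists>pos g. C1_drawing V E pos g)"

end

theory Submission
  imports Defs
begin

lemma fn_sub:
  assumes "simple_graph V E"
  shows "false_nbrs E g c \<subseteq> V"
proof
  fix x assume "x \<in> false_nbrs E g c"
  then obtain e f where x: "x \<in> e" and ef: "cross E g e f c" unfolding false_nbrs_def by blast
  have "e \<in> E" using ef unfolding cross_def by simp
  then obtain u v where "u \<in> V" "v \<in> V" "e = {u,v}"
    using assms unfolding simple_graph_def by blast
  thus "x \<in> V" using x by blast
qed

lemma fn_card:
  assumes "simple_graph V E" "one_planar_drawing V E pos g" "c \<in> crossings E g"
  shows "card (false_nbrs E g c) \<ge> 4"
proof -
  obtain e f where ef: "cross E g e f c" using assms(3) unfolding crossings_def mem_Collect_eq by (elim exE)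
  have fe: "cross E g f e c" using ef unfolding cross_def by auto
  have D: "\<forall>e f p. cross E g e f p \<longrightarrow> e \<inter> f = {}"
    using assms(2) unfolding one_planar_drawing_def by (elim conjE)
  have dis: "e \<inter> f = {}" by (rule D[rule_format, OF ef])
  have eE: "e \<in> E" and fE: "f \<in> E" using ef unfolding cross_def by simp_all
  have S: "\<forall>e\<in>E. \<exists>u v. u \<in> V \<and> v \<in> V \<and> u \<noteq> v \<and> e = {u, v}"
    using assms(1) unfolding simple_graph_def by (elim conjE)
  from bspec[OF S eE] obtain u v where "u \<in> V" "v \<in> V" "u \<noteq> v" "e = {u,v}" by (elim exE conjE)
  hence ce: "card e = 2" "finite e" by simp_all
  from bspec[OF S fE] obtain x y where "x \<in> V" "y \<in> V" "x \<noteq> y" "f = {x,y}" by (elim exE conjE)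
  hence cf: "card f = 2" "finite f" by simp_all
  have c4: "card (e \<union> f) = 4" using card_Un_disjoint[OF ce(2) cf(2) dis] ce cf by simp
  have "e \<in> {e. \<exists>f. cross E g e f c}" "f \<in> {e. \<exists>f. cross E g e f c}" using ef fe by blast+
  hence sub: "e \<union> f \<subseteq> false_nbrs E g c" unfolding false_nbrs_def by (intro Un_least Union_upper)
  have fV: "finite V" using assms(1) unfolding simple_graph_def by simp
  have "finite (false_nbrs E g c)" by (rule finite_subset[OF fn_sub[OF assms(1)] fV])
  from card_mono[OF this sub] c4 show ?thesis by simp
qed

lemma three_sets:
  fixes A B C :: "'a set"
  assumes "finite A" "finite B" "finite C"
  shows "card A + card B + card C \<le> card (A \<union> B \<union> C) + card (A \<inter> B) + card (A \<inter> C) + card (B \<inter> C)"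
proof -
  have fBC: "finite (B \<union> C)" using assms by simp
  have 1: "card A + card (B \<union> C) = card (A \<union> (B \<union> C)) + card (A \<inter> (B \<union> C))"
    by (rule card_Un_Int[OF assms(1) fBC])
  have 2: "card B + card C = card (B \<union> C) + card (B \<inter> C)" by (rule card_Un_Int[OF assms(2,3)])
  have 3: "card (A \<inter> (B \<union> C)) \<le> card (A \<inter> B) + card (A \<inter> C)"
    unfolding Int_Un_distrib by (rule card_Un_le)
  have 4: "A \<union> B \<union> C = A \<union> (B \<union> C)" by (rule Un_assoc)
  show ?thesis unfolding 4 using 1 2 3 by linarith
qed

lemma arith_aux:
  fixes a b c u x y z v :: nat
  assumes "u \<le> v" "a + b + c \<le> u + x + y + z" "4 \<le> a" "4 \<le> b" "4 \<le> c"
    "x \<le> 1" "y \<le> 1" "z \<le> 1" "v \<le> 8"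
  shows False
  using assms by linarith

theorem lemma2:
  fixes V :: "'a set" and E :: "'a set set"
    and pos :: "'a \<Rightarrow> complex" and g :: "'a set \<Rightarrow> real \<Rightarrow> complex"
  assumes "simple_graph V E"
    and "class_C1 V E"
    and "card V \<le> 8"
    and "C1_drawing V E pos g"
  shows "card (crossings E g) \<le> 2"
proof (rule ccontr)
  assume "\<not> ?thesis"
  hence "3 \<le> card (crossings E g)" by simp
  then obtain c1 c2 c3 where cs: "c1 \<in> crossings E g" "c2 \<in> crossings E g" "c3 \<in> crossings E g"
    "c1 \<noteq> c2" "c1 \<noteq> c3" "c2 \<noteq> c3"
  proof -
    obtain T where T: "T \<subseteq> crossings E g" "card T = 3"
      using \<open>3 \<le> card (crossings E g)\<close> by (meson obtain_subset_with_card_n)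
    then obtain a b c where "T = {a,b,c}" "a \<noteq> b" "a \<noteq> c" "b \<noteq> c"
      using card_3_iff by metis
    thus ?thesis using T that by blast
  qed
  have op: "one_planar_drawing V E pos g" using assms(4) unfolding C1_drawing_def by auto
  have fV: "finite V" using assms(1) unfolding simple_graph_def by auto
  define A where "A = false_nbrs E g c1"
  define B where "B = false_nbrs E g c2"
  define C where "C = false_nbrs E g c3"
  have sub: "A \<subseteq> V" "B \<subseteq> V" "C \<subseteq> V" unfolding A_def B_def C_def using fn_sub[OF assms(1)] by auto
  have fin: "finite A" "finite B" "finite C" using sub fV finite_subset by blast+
  have ge: "card A \<ge> 4" "card B \<ge> 4" "card C \<ge> 4"
    unfolding A_def B_def C_def using fn_card[OF assms(1) op] cs by auto
  have le: "card (A \<inter> B) \<le> 1" "card (A \<inter> C) \<le> 1" "card (B \<inter> C) \<le> 1"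
  proof -
    have H: "\<forall>c1\<in>crossings E g. \<forall>c2\<in>crossings E g. c1 \<noteq> c2 \<longrightarrow>
        card (false_nbrs E g c1 \<inter> false_nbrs E g c2) \<le> 1"
      using assms(4) unfolding C1_drawing_def by blast
    show "card (A \<inter> B) \<le> 1" unfolding A_def B_def using H cs by blast
    show "card (A \<inter> C) \<le> 1" unfolding A_def C_def using H cs by blast
    show "card (B \<inter> C) \<le> 1" unfolding C_def B_def using H cs by blast
  qed
  have h1: "card (A \<union> B \<union> C) \<le> card V" using sub fV by (intro card_mono) auto
  have h2: "card A + card B + card C \<le> card (A \<union> B \<union> C) + card (A \<inter> B) + card (A \<inter> C) + card (B \<inter> C)"
    by (rule three_sets[OF fin])
  show False by (rule arith_aux[OF h1 h2 ge le assms(3)])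
qed

end
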